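(* Let $\Omega\subset\mathbb{R}^d$, $\{q(\cdot|\boldsymbol{\lambda})\}_{\boldsymbol{\lambda}\in\Omega}$ a family of probability densities, $f(\mathbf{z})=-\log\pi(D,\mathbf{z})$, and for $\rho\in\mathcal{P}(\Omega)$ let $\mathcal{L}(\rho)=\mathbb{E}_{\boldsymbol{\lambda}\sim\rho}\mathbb{E}_{\mathbf{z}\sim q(\cdot|\boldsymbol{\lambda})}[f(\mathbf{z})+\log q_\rho(\mathbf{z})]$ with $q_\rho(\mathbf{z})=\int\rho(\boldsymbol{\lambda})q(\mathbf{z}|\boldsymbol{\lambda})d\boldsymbol{\lambda}$. Then for any $\rho,\rho'\in\mathcal{P}(\Omega)$, $$\mathcal{L}(\rho')-\mathcal{L}(\rho)-\int\delta\mathcal{L}(\rho)(\boldsymbol{\lambda})\big(\rho'(\boldsymbol{\lambda})-\rho(\boldsymbol{\lambda})\big)d\boldsymbol{\lambda}\le\mathrm{KL}(\rho',\rho).$$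
   Context: $\delta\mathcal{L}(\rho)(\boldsymbol{\lambda})=\mathbb{E}_{\mathbf{z}\sim q(\cdot|\boldsymbol{\lambda})}[f(\mathbf{z})+\log q_\rho(\mathbf{z})]+1$ is the first variation of $\mathcal{L}$ at $\rho$. $\mathrm{KL}(\rho',\rho)=\int\rho'\log(\rho'/\rho)$. *)

theory Defs
  imports "HOL-Analysis.Analysis"
begin

definition prob_density :: "'a::euclidean_space set \<Rightarrow> ('a \<Rightarrow> real) \<Rightarrow> bool" where
  "prob_density \<Omega> \<rho> \<longleftrightarrow>
     \<rho> \<in> borel_measurable lborel \<and> (\<forall>x. 0 \<le> \<rho> x) \<and> (\<forall>x. x \<notin> \<Omega> \<longrightarrow> \<rho> x = 0) \<and>
     integrable lborel \<rho> \<and> (\<integral>x. \<rho> x \<partial>lborel) = 1"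

text \<open>Mixture density q_rho(z) = int rho(lambda) q(z|lambda) dlambda; here q l z = q(z|l).\<close>
definition mixture :: "('a::euclidean_space \<Rightarrow> 'b::euclidean_space \<Rightarrow> real) \<Rightarrow> ('a \<Rightarrow> real) \<Rightarrow> 'b \<Rightarrow> real" where
  "mixture q \<rho> z = (\<integral>l. \<rho> l * q l z \<partial>lborel)"

definition objL :: "('b::euclidean_space \<Rightarrow> real) \<Rightarrow> ('a::euclidean_space \<Rightarrow> 'b \<Rightarrow> real) \<Rightarrow> ('a \<Rightarrow> real) \<Rightarrow> real" where
  "objL f q \<rho> = (\<integral>l. \<rho> l * (\<integral>z. q l z * (f z + ln (mixture q \<rho> z)) \<partial>lborel) \<partial>lborel)"

definition first_variation :: "('b::euclidean_space \<Rightarrow> real) \<Rightarrow> ('a::euclidean_space \<Rightarrow> 'b \<Rightarrow> real) \<Rightarrow> ('a \<Rightarrow> real) \<Rightarrow> 'a \<Rightarrow> real" where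
  "first_variation f q \<rho> l = (\<integral>z. q l z * (f z + ln (mixture q \<rho> z)) \<partial>lborel) + 1"

text \<open>KL(rho', rho) = int rho' log(rho'/rho), valued in the extended reals; it is +infinity
  when rho' is not absolutely continuous w.r.t. rho or the integral diverges
  (its negative part is always integrable, so divergence means +infinity).\<close>
definition KL :: "('a::euclidean_space \<Rightarrow> real) \<Rightarrow> ('a \<Rightarrow> real) \<Rightarrow> ereal" where
  "KL \<rho>' \<rho> =
    (if (AE x in lborel. \<rho> x = 0 \<longrightarrow> \<rho>' x = 0) \<and> integrable lborel (\<lambda>x. \<rho>' x * ln (\<rho>' x / \<rho> x))
     then ereal (\<integral>x. \<rho>' x * ln (\<rho>' x / \<rho> x) \<partial>lborel)
     else \<infinity>)"

end

theory Submission
  imports Defs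
begin

lemma qm_lemma:
  fixes q :: "'a::euclidean_space \<Rightarrow> 'b::euclidean_space \<Rightarrow> real"
  assumes q_meas: "(\<lambda>(l, z). q l z) \<in> borel_measurable (lborel \<Otimes>\<^sub>M lborel)"
  shows "(\<lambda>x. q (fst x) (snd x)) \<in> borel_measurable (lborel \<Otimes>\<^sub>M lborel)"
    and "(\<lambda>x. q (snd x) (fst x)) \<in> borel_measurable (lborel \<Otimes>\<^sub>M lborel)"
proof -
  show 1: "(\<lambda>x. q (fst x) (snd x)) \<in> borel_measurable (lborel \<Otimes>\<^sub>M lborel)"
    using q_meas by (simp add: split_beta')
  show "(\<lambda>x. q (snd x) (fst x)) \<in> borel_measurable (lborel \<Otimes>\<^sub>M lborel)"
    using measurable_pair_swap[OF 1] by simp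
qed

lemma mixture_meas:
  fixes q :: "'a::euclidean_space \<Rightarrow> 'b::euclidean_space \<Rightarrow> real"
  assumes q_meas: "(\<lambda>(l, z). q l z) \<in> borel_measurable (lborel \<Otimes>\<^sub>M lborel)"
    and r: "r \<in> borel_measurable lborel"
  shows "mixture q r \<in> borel_measurable lborel"
proof -
  note qm = qm_lemma[OF q_meas]
  have "(\<lambda>(z::'b,l::'a). r l * q l z) \<in> borel_measurable (lborel \<Otimes>\<^sub>M lborel)"
    using qm(2) r unfolding split_beta' by measurable
  then show ?thesis unfolding mixture_def[abs_def]
    by (rule lborel.borel_measurable_lebesgue_integral)
qed

lemma dens_facts:
  fixes \<Omega> :: "'a::euclidean_space set"
    and q :: "'a \<Rightarrow> 'b::euclidean_space \<Rightarrow> real"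
    and r :: "'a \<Rightarrow> real"
  assumes q_meas: "(\<lambda>(l, z). q l z) \<in> borel_measurable (lborel \<Otimes>\<^sub>M lborel)"
    and q_density0: "\<forall>l\<in>\<Omega>. (\<forall>z. 0 \<le> q l z) \<and> integrable lborel (q l) \<and> (\<integral>z. q l z \<partial>lborel) = 1"
    and r: "prob_density \<Omega> r"
  shows "integrable (lborel \<Otimes>\<^sub>M lborel) (\<lambda>(l, z). r l * q l z)" (is ?I)
    and "\<And>l z. 0 \<le> r l * q l z"
    and "(\<integral>x. (\<lambda>(l, z). r l * q l z) x \<partial>(lborel \<Otimes>\<^sub>M lborel)) = 1"
    and "\<And>z. 0 \<le> mixture q r z"
    and "integrable lborel (mixture q r)"
    and "(\<integral>z. mixture q r z \<partial>lborel) = 1"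
    and "AE z in lborel. integrable lborel (\<lambda>l. r l * q l z)"
    and "AE x in lborel \<Otimes>\<^sub>M lborel. r (fst x) * q (fst x) (snd x) > 0 \<longrightarrow> mixture q r (snd x) > 0"
proof -
  note q_density = q_density0[rule_format]
  note qm = qm_lemma[OF q_meas]
  have rm[measurable]: "r \<in> borel_measurable lborel" and r0: "\<And>x. 0 \<le> r x"
    and rO: "\<And>x. x \<notin> \<Omega> \<Longrightarrow> r x = 0" and ri: "integrable lborel r" and r1: "(\<integral>x. r x \<partial>lborel) = 1"
    using r unfolding prob_density_def by auto
  show nn: "\<And>l z. 0 \<le> r l * q l z"
    using r0 rO q_density by (metis mult_eq_0_iff mult_nonneg_nonneg order_refl)
  have inner: "(\<integral>z. r l * q l z \<partial>lborel) = r l" for l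
    using q_density rO by (cases "l \<in> \<Omega>") auto
  have inner_int: "integrable lborel (\<lambda>z. r l * q l z)" for l
    using q_density rO by (cases "l \<in> \<Omega>") auto
  have pm: "(\<lambda>(l, z). r l * q l z) \<in> borel_measurable (lborel \<Otimes>\<^sub>M lborel)"
    using qm(1) unfolding split_beta' by measurable
  show I: ?I
  proof (rule lborel_pair.Fubini_integrable[OF pm])
    show "integrable lborel (\<lambda>x. \<integral>y. norm ((\<lambda>(l, z). r l * q l z) (x, y)) \<partial>lborel)"
    proof -
      have "(\<lambda>x. \<integral>y. norm ((\<lambda>(l, z). r l * q l z) (x, y)) \<partial>lborel) = r"
      proof
        fix x show "(\<integral>y. norm ((\<lambda>(l, z). r l * q l z) (x, y)) \<partial>lborel) = r x"
          using inner[of x] by (simp only: real_norm_def abs_of_nonneg[OF nn] split)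
      qed
      then show ?thesis using ri by simp
    qed
    show "AE x in lborel. integrable lborel (\<lambda>y. (\<lambda>(l, z). r l * q l z) (x, y))"
      using inner_int by simp
  qed
  have e: "(\<lambda>l. \<integral>z. r l * q l z \<partial>lborel) = r" by (intro ext inner)
  have "(\<integral>x. (\<lambda>(l, z). r l * q l z) x \<partial>(lborel \<Otimes>\<^sub>M lborel)) = (\<integral>l. (\<integral>z. r l * q l z \<partial>lborel) \<partial>lborel)"
    by (rule lborel_pair.integral_fst[OF I, symmetric])
  also have "\<dots> = 1" using arg_cong[where f="lebesgue_integral lborel", OF e] r1 by simp
  finally show P1: "(\<integral>x. (\<lambda>(l, z). r l * q l z) x \<partial>(lborel \<Otimes>\<^sub>M lborel)) = 1" .
  show "\<And>z. 0 \<le> mixture q r z"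
    unfolding mixture_def using nn by (simp add: integral_nonneg)
  show "integrable lborel (mixture q r)"
    using lborel_pair.integrable_snd[OF I] unfolding mixture_def[abs_def] by simp
  show "(\<integral>z. mixture q r z \<partial>lborel) = 1"
    using lborel_pair.integral_snd[OF I] P1
    unfolding mixture_def[abs_def] by simp
  show "AE z in lborel. integrable lborel (\<lambda>l. r l * q l z)"
    using lborel_pair.AE_integrable_snd[OF I] by simp
  show "AE x in lborel \<Otimes>\<^sub>M lborel. r (fst x) * q (fst x) (snd x) > 0 \<longrightarrow> mixture q r (snd x) > 0"
  proof -
    have mm[measurable]: "mixture q r \<in> borel_measurable lborel"
      by (rule mixture_meas[OF q_meas rm])
    define g where "g = (\<lambda>l z. indicator {z. mixture q r z \<le> 0} z * (r l * q l z))"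
    have gm: "(\<lambda>x. g (fst x) (snd x)) \<in> borel_measurable (lborel \<Otimes>\<^sub>M lborel)"
      unfolding g_def using qm(1) by measurable
    have gi: "integrable (lborel \<Otimes>\<^sub>M lborel) (case_prod g)"
      by (rule Bochner_Integration.integrable_bound[OF I]) (use gm in \<open>auto simp: split_beta' g_def indicator_def nn\<close>)
    have g0: "\<And>x. 0 \<le> case_prod g x" unfolding g_def using nn by (auto simp: indicator_def)
    have "integral\<^sup>L (lborel \<Otimes>\<^sub>M lborel) (case_prod g) = (\<integral>z. (\<integral>l. g l z \<partial>lborel) \<partial>lborel)"
      by (rule lborel_pair.integral_snd[OF gi, symmetric])
    also have "\<dots> = (\<integral>z. 0 \<partial>lborel)"
    proof -
      have "(\<integral>l. g l z \<partial>lborel) = 0" for z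
      proof -
      have "(\<integral>l. g l z \<partial>lborel) = indicator {z. mixture q r z \<le> 0} z * mixture q r z"
        unfolding g_def mixture_def by simp
      also have "\<dots> = 0" using \<open>\<And>z. 0 \<le> mixture q r z\<close>[of z] by (auto simp: indicator_def)
      finally show "(\<integral>l. g l z \<partial>lborel) = 0" .
      qed
      then show ?thesis by simp
    qed
    finally have "integral\<^sup>L (lborel \<Otimes>\<^sub>M lborel) (case_prod g) = 0" by simp
    then have "AE x in lborel \<Otimes>\<^sub>M lborel. case_prod g x = 0"
      using integral_nonneg_eq_0_iff_AE[OF gi] g0 by simp
    then show ?thesis
      by eventually_elim (auto simp: g_def indicator_def split: prod.splits)
  qed
qed

lemma pw_ineq:
  fixes a b Q A B F :: real
  assumes "0 \<le> a" "0 \<le> b" "0 \<le> a * Q" "0 \<le> b * Q" "0 \<le> A" "0 \<le> B"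
    and "b = 0 \<longrightarrow> a = 0" "a * Q > 0 \<longrightarrow> A > 0" "b * Q > 0 \<longrightarrow> B > 0"
  shows "a * (Q * (F + ln A)) - a * (Q * (F + ln B)) - a * ln (a / b) * Q \<le> b * Q * (A / B) - a * Q"
proof (cases "a * Q = 0")
  case True
  then have "a * (Q * (F + ln A)) - a * (Q * (F + ln B)) - a * ln (a / b) * Q = 0"
    by (cases "a = 0") (simp_all add: algebra_simps)
  moreover have "0 \<le> b * Q * (A / B)" using assms by simp
  ultimately show ?thesis using True by linarith
next
  case False
  then have aQ: "a * Q > 0" using assms(3) by (metis less_eq_real_def)
  then have a: "a > 0" and Q: "Q > 0" using assms
    by (metis less_eq_real_def mult_eq_0_iff zero_less_mult_pos, metis assms(1) less_eq_real_def mult_eq_0_iff zero_less_mult_pos)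
  have b: "b > 0" using assms a by auto
  have A: "A > 0" using assms aQ by auto
  have B: "B > 0" using assms b Q by auto
  define x where "x = A * b / (B * a)"
  have x: "x > 0" unfolding x_def using a b A B by simp
  have lnx: "ln x = ln A - ln B - ln (a / b)"
    unfolding x_def using a b A B by (simp add: ln_div ln_mult)
  have "ln x \<le> x - 1" using ln_le_minus_one[OF x] .
  then have "a * Q * ln x \<le> a * Q * (x - 1)" using aQ by (simp add: mult_left_mono)
  also have "a * Q * (x - 1) = b * Q * (A / B) - a * Q"
    unfolding x_def using a B by (simp add: field_simps)
  finally show ?thesis unfolding lnx by (simp add: algebra_simps)
qed

theorem lemma3:
  fixes \<Omega> :: "'a::euclidean_space set"
    and q :: "'a \<Rightarrow> 'b::euclidean_space \<Rightarrow> real"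
    and piD :: "'b \<Rightarrow> real"
    and f :: "'b \<Rightarrow> real"
    and \<rho> \<rho>' :: "'a \<Rightarrow> real"
  assumes q_meas: "(\<lambda>(l, z). q l z) \<in> borel_measurable (lborel \<Otimes>\<^sub>M lborel)"
    and q_density: "\<And>l. l \<in> \<Omega> \<Longrightarrow> (\<forall>z. 0 \<le> q l z) \<and> integrable lborel (q l) \<and> (\<integral>z. q l z \<partial>lborel) = 1"
    and piD_meas: "piD \<in> borel_measurable lborel"
    and piD_pos: "\<And>z. 0 < piD z"
    and f_def: "\<And>z. f z = - ln (piD z)"
    and \<rho>: "prob_density \<Omega> \<rho>"
    and \<rho>': "prob_density \<Omega> \<rho>'"
    and int1: "integrable (lborel \<Otimes>\<^sub>M lborel)
                 (\<lambda>(l, z). \<rho> l * (q l z * (f z + ln (mixture q \<rho> z))))"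
    and int2: "integrable (lborel \<Otimes>\<^sub>M lborel)
                 (\<lambda>(l, z). \<rho>' l * (q l z * (f z + ln (mixture q \<rho>' z))))"
    and int3: "integrable (lborel \<Otimes>\<^sub>M lborel)
                 (\<lambda>(l, z). \<rho>' l * (q l z * (f z + ln (mixture q \<rho> z))))"
  shows "ereal (objL f q \<rho>' - objL f q \<rho>
            - (\<integral>l. first_variation f q \<rho> l * (\<rho>' l - \<rho> l) \<partial>lborel)) \<le> KL \<rho>' \<rho>"
proof -
  let ?M = "lborel \<Otimes>\<^sub>M lborel :: ('a \<times> 'b) measure"
  note qm = qm_lemma[OF q_meas]
  have qd: "\<forall>l\<in>\<Omega>. (\<forall>z. 0 \<le> q l z) \<and> integrable lborel (q l) \<and> (\<integral>z. q l z \<partial>lborel) = 1"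
    using q_density by blast
  note D = dens_facts[where \<Omega>=\<Omega> and q=q and r=\<rho>, OF q_meas qd \<rho>]
  note D' = dens_facts[where \<Omega>=\<Omega> and q=q and r=\<rho>', OF q_meas qd \<rho>']
  have rm[measurable]: "\<rho> \<in> borel_measurable lborel" and r0: "\<And>x. 0 \<le> \<rho> x"
    and rO: "\<And>x. x \<notin> \<Omega> \<Longrightarrow> \<rho> x = 0" and ri: "integrable lborel \<rho>" and r1: "(\<integral>x. \<rho> x \<partial>lborel) = 1"
    using \<rho> unfolding prob_density_def by auto
  have rm'[measurable]: "\<rho>' \<in> borel_measurable lborel" and r0': "\<And>x. 0 \<le> \<rho>' x"
    and rO': "\<And>x. x \<notin> \<Omega> \<Longrightarrow> \<rho>' x = 0" and ri': "integrable lborel \<rho>'" and r1': "(\<integral>x. \<rho>' x \<partial>lborel) = 1"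
    using \<rho>' unfolding prob_density_def by auto
  define A where "A = mixture q \<rho>'"
  define B where "B = mixture q \<rho>"
  define F1 where "F1 = (\<lambda>l z. \<rho> l * (q l z * (f z + ln (B z))))"
  define F2 where "F2 = (\<lambda>l z. \<rho>' l * (q l z * (f z + ln (A z))))"
  define F3 where "F3 = (\<lambda>l z. \<rho>' l * (q l z * (f z + ln (B z))))"
  have i1: "integrable ?M (case_prod F1)" using int1 unfolding F1_def B_def .
  have i2: "integrable ?M (case_prod F2)" using int2 unfolding F2_def A_def .
  have i3: "integrable ?M (case_prod F3)" using int3 unfolding F3_def B_def .
  have e2: "objL f q \<rho>' = integral\<^sup>L ?M (case_prod F2)"
    unfolding objL_def using lborel_pair.integral_fst[OF i2] unfolding F2_def A_def by simp
  have e1: "objL f q \<rho> = integral\<^sup>L ?M (case_prod F1)"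
    unfolding objL_def using lborel_pair.integral_fst[OF i1] unfolding F1_def B_def by simp
  have fv: "(\<integral>l. first_variation f q \<rho> l * (\<rho>' l - \<rho> l) \<partial>lborel)
      = (\<integral>l. ((\<integral>z. F3 l z \<partial>lborel) - (\<integral>z. F1 l z \<partial>lborel)) + (\<rho>' l - \<rho> l) \<partial>lborel)"
  proof -
    have "first_variation f q \<rho> l * (\<rho>' l - \<rho> l) = ((\<integral>z. F3 l z \<partial>lborel) - (\<integral>z. F1 l z \<partial>lborel)) + (\<rho>' l - \<rho> l)" for l
      unfolding first_variation_def F1_def F3_def B_def
      by (simp only: integral_mult_right_zero) (simp add: algebra_simps)
    then show ?thesis by simp
  qed
  also have "\<dots> = integral\<^sup>L ?M (case_prod F3) - integral\<^sup>L ?M (case_prod F1) + (1 - 1)"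
    using lborel_pair.integral_fst[OF i1] lborel_pair.integral_fst[OF i3]
      lborel_pair.integrable_fst[OF i1] lborel_pair.integrable_fst[OF i3] ri ri' r1 r1'
    by (simp add: Bochner_Integration.integral_add Bochner_Integration.integral_diff)
  finally have fv': "(\<integral>l. first_variation f q \<rho> l * (\<rho>' l - \<rho> l) \<partial>lborel)
      = integral\<^sup>L ?M (case_prod F3) - integral\<^sup>L ?M (case_prod F1)" by simp
  define H1 where "H1 = (\<lambda>x. case_prod F2 x - case_prod F3 x)"
  have iH1: "integrable ?M H1" unfolding H1_def by (rule Bochner_Integration.integrable_diff[OF i2 i3])
  have LHS: "objL f q \<rho>' - objL f q \<rho> - (\<integral>l. first_variation f q \<rho> l * (\<rho>' l - \<rho> l) \<partial>lborel)
     = integral\<^sup>L ?M H1"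
  proof -
    have "integral\<^sup>L ?M H1 = integral\<^sup>L ?M (case_prod F2) - integral\<^sup>L ?M (case_prod F3)"
      unfolding H1_def by (rule Bochner_Integration.integral_diff[OF i2 i3])
    then show ?thesis unfolding e1 e2 fv' by simp
  qed
  show ?thesis
  proof (cases "(AE x in lborel. \<rho> x = 0 \<longrightarrow> \<rho>' x = 0) \<and> integrable lborel (\<lambda>x. \<rho>' x * ln (\<rho>' x / \<rho> x))")
    case False
    then have "KL \<rho>' \<rho> = \<infinity>" unfolding KL_def by (rule if_not_P)
    then show ?thesis by simp
  next
    case True
    then have ac: "AE x in lborel. \<rho> x = 0 \<longrightarrow> \<rho>' x = 0"
      and ki: "integrable lborel (\<lambda>x. \<rho>' x * ln (\<rho>' x / \<rho> x))" by auto
    define K where "K = (\<integral>x. \<rho>' x * ln (\<rho>' x / \<rho> x) \<partial>lborel)"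
    have KL: "KL \<rho>' \<rho> = ereal K" unfolding KL_def K_def using True by simp
    have qz[measurable]: "(\<lambda>l. q l z) \<in> borel_measurable lborel" for z
      using measurable_compose[OF measurable_Pair2'[of z lborel lborel] qm(1)] by simp
    have Am[measurable]: "A \<in> borel_measurable lborel" unfolding A_def by (rule mixture_meas[OF q_meas rm'])
    have Bm[measurable]: "B \<in> borel_measurable lborel" unfolding B_def by (rule mixture_meas[OF q_meas rm])
    have A0: "\<And>z. 0 \<le> A z" unfolding A_def by (rule D'(4))
    have B0: "\<And>z. 0 \<le> B z" unfolding B_def by (rule D(4))
    define H2 where "H2 = (\<lambda>l z. \<rho>' l * ln (\<rho>' l / \<rho> l) * q l z)"
    define G1 where "G1 = (\<lambda>l z. \<rho> l * q l z * (A z / B z))"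
    define P where "P = (\<lambda>l z. \<rho>' l * q l z)"
    have iP: "integrable ?M (case_prod P)" unfolding P_def by (rule D'(1))
    have eP: "integral\<^sup>L ?M (case_prod P) = 1" unfolding P_def by (rule D'(3))
    have H2m: "case_prod H2 \<in> borel_measurable ?M"
      unfolding H2_def split_beta' using qm(1) by measurable
    have inH2: "(\<integral>z. H2 l z \<partial>lborel) = \<rho>' l * ln (\<rho>' l / \<rho> l)" for l
      unfolding H2_def using q_density rO' by (cases "l \<in> \<Omega>") auto
    have inH2a: "(\<integral>z. norm (H2 l z) \<partial>lborel) = norm (\<rho>' l * ln (\<rho>' l / \<rho> l))" for l
    proof (cases "l \<in> \<Omega>")
      case True
      have "(\<integral>z. norm (H2 l z) \<partial>lborel) = (\<integral>z. \<bar>\<rho>' l * ln (\<rho>' l / \<rho> l)\<bar> * q l z \<partial>lborel)"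
        unfolding H2_def using q_density[OF True] by (simp add: abs_mult)
      then show ?thesis using q_density[OF True] by simp
    qed (simp add: H2_def rO')
    have iH2: "integrable ?M (case_prod H2)"
    proof (rule lborel_pair.Fubini_integrable[OF H2m])
      show "integrable lborel (\<lambda>x. \<integral>y. norm (case_prod H2 (x, y)) \<partial>lborel)"
        unfolding split inH2a by (rule integrable_norm[OF ki])
      show "AE x in lborel. integrable lborel (\<lambda>y. case_prod H2 (x, y))"
      proof (rule AE_I2)
        fix l show "integrable lborel (\<lambda>y. case_prod H2 (l, y))"
          unfolding H2_def using q_density rO' by (cases "l \<in> \<Omega>") auto
      qed
    qed
    have eH2: "integral\<^sup>L ?M (case_prod H2) = K"
      using lborel_pair.integral_fst[OF iH2] unfolding K_def inH2 by simp
    have G1m: "case_prod G1 \<in> borel_measurable ?M"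
      unfolding G1_def split_beta' using qm(1) by measurable
    have G10: "\<And>x. 0 \<le> case_prod G1 x"
      unfolding G1_def split_beta' using D(2) A0 B0 by simp
    have nnG1: "(\<integral>\<^sup>+x. ennreal (case_prod G1 x) \<partial>?M) \<le> 1"
    proof -
      have "(\<integral>\<^sup>+x. ennreal (case_prod G1 x) \<partial>?M) = (\<integral>\<^sup>+z. (\<integral>\<^sup>+l. ennreal (G1 l z) \<partial>lborel) \<partial>lborel)"
        using lborel_pair.nn_integral_snd[of "\<lambda>x. ennreal (case_prod G1 x)"] G1m by simp
      also have "\<dots> \<le> (\<integral>\<^sup>+z. ennreal (A z) \<partial>lborel)"
      proof (rule nn_integral_mono_AE)
        show "AE z in lborel. (\<integral>\<^sup>+l. ennreal (G1 l z) \<partial>lborel) \<le> ennreal (A z)"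
          using D(7)
        proof eventually_elim
          case (elim z)
          have "(\<integral>\<^sup>+l. ennreal (G1 l z) \<partial>lborel) = (\<integral>\<^sup>+l. ennreal (\<rho> l * q l z) * ennreal (A z / B z) \<partial>lborel)"
          proof -
            have "ennreal (G1 l z) = ennreal (\<rho> l * q l z) * ennreal (A z / B z)" for l
              unfolding G1_def by (rule ennreal_mult) (use D(2) A0 B0 in simp_all)
            then show ?thesis by simp
          qed
          also have "\<dots> = (\<integral>\<^sup>+l. ennreal (\<rho> l * q l z) \<partial>lborel) * ennreal (A z / B z)"
            using qm(1) by (intro nn_integral_multc) measurable
          also have "(\<integral>\<^sup>+l. ennreal (\<rho> l * q l z) \<partial>lborel) = ennreal (B z)"
            unfolding B_def mixture_def using elim D(2) by (intro nn_integral_eq_integral) auto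
          also have "ennreal (B z) * ennreal (A z / B z) = ennreal (B z * (A z / B z))"
            by (rule ennreal_mult[symmetric]) (use A0 B0 in simp_all)
          also have "\<dots> \<le> ennreal (A z)"
            using A0[of z] B0[of z] by (cases "B z = 0") (auto intro: ennreal_leI)
          finally show ?case .
        qed
      qed
      also have "\<dots> = ennreal 1"
        using nn_integral_eq_integral[OF D'(5)] D'(4) D'(6) unfolding A_def by simp
      finally show ?thesis by simp
    qed
    have iG1: "integrable ?M (case_prod G1)"
    proof (rule integrableI_nonneg[OF G1m])
      show "AE x in ?M. 0 \<le> case_prod G1 x" using G10 by simp
      show "(\<integral>\<^sup>+x. ennreal (case_prod G1 x) \<partial>?M) < \<infinity>"
        using nnG1 by (rule le_less_trans) simp
    qed
    have eG1: "integral\<^sup>L ?M (case_prod G1) \<le> 1"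
    proof -
      have "integral\<^sup>L ?M (case_prod G1) = enn2real (\<integral>\<^sup>+x. ennreal (case_prod G1 x) \<partial>?M)"
        by (rule integral_eq_nn_integral[OF G1m]) (use G10 in auto)
      also have "\<dots> \<le> 1" using nnG1 by (simp add: enn2real_leI)
      finally show ?thesis .
    qed
    have ac': "AE x in ?M. \<rho> (fst x) = 0 \<longrightarrow> \<rho>' (fst x) = 0"
    proof (rule lborel_pair.AE_pair_measure)
      show "{x \<in> space ?M. \<rho> (fst x) = 0 \<longrightarrow> \<rho>' (fst x) = 0} \<in> sets ?M" by measurable
      show "AE l in lborel. AE z in lborel. \<rho> (fst (l, z)) = 0 \<longrightarrow> \<rho>' (fst (l, z)) = 0"
        using ac by eventually_elim (auto intro: AE_I2)
    qed
    have pw: "AE x in ?M. H1 x - case_prod H2 x \<le> case_prod G1 x - case_prod P x"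
      using ac' D(8) D'(8)
    proof eventually_elim
      case (elim x)
      obtain l z where x: "x = (l, z)" by (cases x)
      show ?case
        using pw_ineq[of "\<rho>' l" "\<rho> l" "q l z" "A z" "B z" "f z"] elim r0 r0' D(2) D'(2) A0 B0
        unfolding x H1_def H2_def G1_def P_def F2_def F3_def A_def B_def by simp
    qed
    have "integral\<^sup>L ?M H1 - integral\<^sup>L ?M (case_prod H2) = (\<integral>x. H1 x - case_prod H2 x \<partial>?M)"
      by (rule Bochner_Integration.integral_diff[OF iH1 iH2, symmetric])
    also have "\<dots> \<le> (\<integral>x. case_prod G1 x - case_prod P x \<partial>?M)"
      by (rule integral_mono_AE[OF Bochner_Integration.integrable_diff[OF iH1 iH2] Bochner_Integration.integrable_diff[OF iG1 iP] pw])
    also have "\<dots> = integral\<^sup>L ?M (case_prod G1) - integral\<^sup>L ?M (case_prod P)"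
      by (rule Bochner_Integration.integral_diff[OF iG1 iP])
    also have "\<dots> \<le> 0" using eG1 eP by simp
    finally have "integral\<^sup>L ?M H1 \<le> K" using eH2 by simp
    then show ?thesis unfolding KL LHS by simp
  qed
qed

end
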